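(* For $n \ge 3$, $\dim_{1,f}(C_n)=\frac{n}{2}$ if $n \in \{3,4\}$, and $\dim_{1,f}(C_n)=\frac{n}{4}$ if $n \ge 5$.
   Context: $C_n$ is the cycle on $n$ vertices. $d(x,y)$ is the distance in $G$. $d_1(x,y)=\min\{d(x,y),2\}$ and $R_1\{x,y\}=\{z\in V(G): d_1(x,z)\neq d_1(y,z)\}$. For a function $g$ on $V(G)$ and $U\subseteq V(G)$, $g(U)=\sum_{s\in U}g(s)$. A function $h:V(G)\to[0,1]$ is a $1$-truncated resolving function of $G$ if $h(R_1\{x,y\})\ge 1$ for all distinct $x,y\in V(G)$; $\dim_{1,f}(G)$ is the minimum of $h(V(G))$ over all such $h$. *)

theory Defs
  imports Complex_Main
begin

definition gdist :: "('a \<Rightarrow> 'a \<Rightarrow> bool) \<Rightarrow> 'a \<Rightarrow> 'a \<Rightarrow> nat" where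
  "gdist E x y = (LEAST k. (E ^^ k) x y)"

definition dist1 :: "('a \<Rightarrow> 'a \<Rightarrow> bool) \<Rightarrow> 'a \<Rightarrow> 'a \<Rightarrow> nat" where
  "dist1 E x y = min (gdist E x y) 2"

definition R1 :: "'a set \<Rightarrow> ('a \<Rightarrow> 'a \<Rightarrow> bool) \<Rightarrow> 'a \<Rightarrow> 'a \<Rightarrow> 'a set" where
  "R1 V E x y = {z \<in> V. dist1 E x z \<noteq> dist1 E y z}"

definition trunc1_resolving :: "'a set \<Rightarrow> ('a \<Rightarrow> 'a \<Rightarrow> bool) \<Rightarrow> ('a \<Rightarrow> real) \<Rightarrow> bool" where
  "trunc1_resolving V E h \<longleftrightarrow>
     (\<forall>v\<in>V. 0 \<le> h v \<and> h v \<le> 1) \<and>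
     (\<forall>x\<in>V. \<forall>y\<in>V. x \<noteq> y \<longrightarrow> sum h (R1 V E x y) \<ge> 1)"

definition frac_dim1 :: "'a set \<Rightarrow> ('a \<Rightarrow> 'a \<Rightarrow> bool) \<Rightarrow> real" where
  "frac_dim1 V E = Inf {sum h V | h. trunc1_resolving V E h}"

definition cycle_V :: "nat \<Rightarrow> nat set" where
  "cycle_V n = {0..<n}"

definition cycle_E :: "nat \<Rightarrow> nat \<Rightarrow> nat \<Rightarrow> bool" where
  "cycle_E n i j \<longleftrightarrow> i < n \<and> j < n \<and> (j = (i + 1) mod n \<or> i = (j + 1) mod n)"

end

theory Submission
  imports Defs
begin


definition sc :: "nat \<Rightarrow> nat \<Rightarrow> nat" where "sc n i = (if Suc i = n then 0 else Suc i)"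
definition pr :: "nat \<Rightarrow> nat \<Rightarrow> nat" where "pr n i = (if i = 0 then n - 1 else i - 1)"

lemma adj_sc: assumes "i < n" "j < n"
  shows "cycle_E n i j \<longleftrightarrow> (j = sc n i \<or> i = sc n j)"
proof -
  have a: "(k + 1) mod n = sc n k" if "k < n" for k
    using that by (auto simp: sc_def)
  show ?thesis using assms a[of i] a[of j] by (auto simp: cycle_E_def)
qed

lemma walk: assumes "x < n" shows "(cycle_E n ^^ m) x ((x + m) mod n)"
proof (induction m)
  case 0 then show ?case using assms by simp
next
  case (Suc m)
  have "cycle_E n ((x + m) mod n) ((x + Suc m) mod n)"
    using assms unfolding cycle_E_def by (simp add: mod_Suc_eq)
  then show ?case using Suc relpowp_Suc_I by fastforce
qed

lemma conn: assumes "x < n" "y < n" shows "\<exists>k. (cycle_E n ^^ k) x y"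
proof -
  have "(x + (y + n - x)) mod n = y" using assms by simp
  then show ?thesis using walk[OF assms(1), of "y + n - x"] by metis
qed

definition d1c :: "nat \<Rightarrow> nat \<Rightarrow> nat \<Rightarrow> nat" where
  "d1c n x y = (if x = y then 0 else if (y = sc n x \<or> x = sc n y) then 1 else 2)"

lemma d1: assumes "x < n" "y < n"
  shows "dist1 (cycle_E n) x y = d1c n x y"
proof -
  obtain k where k: "(cycle_E n ^^ k) x y" using conn[OF assms] by blast
  show ?thesis
  proof (cases "x = y")
    case True then show ?thesis by (simp add: dist1_def gdist_def d1c_def)
  next
    case ne: False
    show ?thesis
    proof (cases "cycle_E n x y")
      case True
      have "gdist (cycle_E n) x y = 1" unfolding gdist_def
        apply (rule Least_equality)
        using True ne by (auto simp: Suc_le_eq intro: ccontr)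
      then show ?thesis using True ne adj_sc[OF assms] by (simp add: dist1_def d1c_def)
    next
      case False
      let ?L = "gdist (cycle_E n) x y"
      have L: "(cycle_E n ^^ ?L) x y" unfolding gdist_def using k by (rule LeastI)
      have "?L \<noteq> 0" using L ne by (metis relpowp_0_E)
      moreover have "?L \<noteq> 1" using L False by (metis relpowp_1)
      ultimately have "?L \<ge> 2" by linarith
      then show ?thesis using False ne adj_sc[OF assms] by (simp add: dist1_def d1c_def)
    qed
  qed
qed

lemma R1_char: assumes "x < n" "y < n"
  shows "R1 (cycle_V n) (cycle_E n) x y = {z. z < n \<and> d1c n x z \<noteq> d1c n y z}"
  using d1[OF assms(1)] d1[OF assms(2)] by (auto simp: R1_def cycle_V_def)




lemma sc_lt: "x < n \<Longrightarrow> sc n x < n" unfolding sc_def by auto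
lemma pr_lt: "x < n \<Longrightarrow> pr n x < n" unfolding pr_def by auto
lemma sc_pr: "x < n \<Longrightarrow> sc n (pr n x) = x" unfolding sc_def pr_def by auto
lemma pr_sc: "x < n \<Longrightarrow> pr n (sc n x) = x" unfolding sc_def pr_def by auto
lemma sc_ne: "2 \<le> n \<Longrightarrow> x < n \<Longrightarrow> sc n x \<noteq> x" unfolding sc_def by auto
lemma pr_ne: "2 \<le> n \<Longrightarrow> x < n \<Longrightarrow> pr n x \<noteq> x" unfolding pr_def by auto
lemma sc_inj: "a < n \<Longrightarrow> b < n \<Longrightarrow> sc n a = sc n b \<Longrightarrow> a = b" by (metis pr_sc)

lemma key: assumes "n \<ge> 5" "x < n" "y < n" "x \<noteq> y" "\<not>(y = sc n x \<or> x = sc n y)"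
  "sc n x = sc n y \<or> y = sc n (sc n x)" "pr n x = sc n y \<or> y = sc n (pr n x)"
  shows False
  using assms unfolding sc_def pr_def by (auto split: if_splits)
lemma m1: "n \<ge> 5 \<Longrightarrow> x < n \<Longrightarrow> d1c n x (pr n x) \<noteq> d1c n (sc n x) (pr n x)"
  unfolding d1c_def sc_def pr_def by auto
lemma m4: "n \<ge> 5 \<Longrightarrow> x < n \<Longrightarrow> d1c n x (sc n (sc n x)) \<noteq> d1c n (sc n x) (sc n (sc n x))"
  unfolding d1c_def sc_def pr_def by auto
lemma dist4: assumes "n \<ge> 5" "i < n"
  shows "distinct [pr n i, i, sc n i, sc n (sc n i)]"
  using assms by (auto simp: sc_def pr_def split: if_splits)
lemma self_mem: "x \<noteq> y \<Longrightarrow> d1c n x x \<noteq> d1c n y x" "x \<noteq> y \<Longrightarrow> d1c n x y \<noteq> d1c n y y"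
  unfolding d1c_def by auto

definition S :: "nat \<Rightarrow> nat \<Rightarrow> nat \<Rightarrow> nat set" where
  "S n x y = {z. z < n \<and> d1c n x z \<noteq> d1c n y z}"

lemma S_sym: "S n x y = S n y x" unfolding S_def by auto

lemma four_adj: assumes "n \<ge> 5" "x < n"
  shows "4 \<le> card (S n x (sc n x))"
proof -
  have sub: "set [pr n x, x, sc n x, sc n (sc n x)] \<subseteq> S n x (sc n x)"
    using m1[OF assms] m4[OF assms] self_mem[of x "sc n x" n] dist4[OF assms] assms
    by (auto simp: S_def sc_lt pr_lt)
  have "finite (S n x (sc n x))" unfolding S_def by simp
  then have "card (set [pr n x, x, sc n x, sc n (sc n x)]) \<le> card (S n x (sc n x))"
    using sub card_mono by blast
  then show ?thesis using distinct_card[OF dist4[OF assms]] by simp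
qed

lemma side: assumes "n \<ge> 5" "x < n" "y < n" "x \<noteq> y" "\<not>(y = sc n x \<or> x = sc n y)"
  shows "\<exists>c. c < n \<and> c \<noteq> x \<and> c \<noteq> y \<and> (c = sc n x \<or> x = sc n c) \<and> \<not>(c = sc n y \<or> y = sc n c)"
proof (cases "sc n x = sc n y \<or> y = sc n (sc n x)")
  case False
  then show ?thesis using assms
    by (intro exI[of _ "sc n x"]) (auto simp: sc_lt sc_ne)
next
  case True
  then have "\<not>(pr n x = sc n y \<or> y = sc n (pr n x))" using key[OF assms] by blast
  then show ?thesis using assms sc_pr[OF assms(2)]
    by (intro exI[of _ "pr n x"]) (auto simp: pr_lt pr_ne)
qed

lemma four_non: assumes "n \<ge> 5" "x < n" "y < n" "x \<noteq> y" "\<not>(y = sc n x \<or> x = sc n y)"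
  shows "4 \<le> card (S n x y)"
proof -
  obtain c where c: "c < n \<and> c \<noteq> x \<and> c \<noteq> y \<and> (c = sc n x \<or> x = sc n c) \<and> \<not>(c = sc n y \<or> y = sc n c)"
    using side[OF assms] by blast
  obtain d where d: "d < n \<and> d \<noteq> y \<and> d \<noteq> x \<and> (d = sc n y \<or> y = sc n d) \<and> \<not>(d = sc n x \<or> x = sc n d)"
    using side[OF assms(1,3,2)] assms(4,5) by metis
  have cd: "c \<noteq> d" "c \<noteq> x" "c \<noteq> y" "d \<noteq> x" "d \<noteq> y" using c d by blast+
  have ds: "distinct [x, y, c, d]" using cd assms(4) by auto
  have sub: "set [x, y, c, d] \<subseteq> S n x y"
    using c d assms self_mem[of x y n] by (auto simp: S_def d1c_def)
  have "finite (S n x y)" unfolding S_def by simp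
  then have "card (set [x, y, c, d]) \<le> card (S n x y)"
    using sub card_mono by blast
  then show ?thesis using distinct_card[OF ds] by simp
qed

lemma four_all: assumes "n \<ge> 5" "x < n" "y < n" "x \<noteq> y"
  shows "4 \<le> card (S n x y)"
proof -
  consider "y = sc n x" | "x = sc n y" | "\<not>(y = sc n x \<or> x = sc n y)" by blast
  then show ?thesis
  proof cases
    case 1 then show ?thesis using four_adj[OF assms(1,2)] by simp
  next
    case 2 then show ?thesis using four_adj[OF assms(1,3)] S_sym by metis
  next
    case 3 then show ?thesis using four_non[OF assms] by simp
  qed
qed

lemma adj_sub: assumes "n \<ge> 5" "i < n"
  shows "S n i (sc n i) \<subseteq> {pr n i, i, sc n i, sc n (sc n i)}"
proof
  fix z assume z: "z \<in> S n i (sc n i)"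
  then have zn: "z < n" and ne: "d1c n i z \<noteq> d1c n (sc n i) z" by (auto simp: S_def)
  have si: "sc n i < n" using assms sc_lt by blast
  show "z \<in> {pr n i, i, sc n i, sc n (sc n i)}"
  proof (rule ccontr)
    assume nz: "z \<notin> {pr n i, i, sc n i, sc n (sc n i)}"
    have zz: "z \<noteq> pr n i" "z \<noteq> i" using nz by auto
    have a1: "i \<noteq> sc n z"
    proof
      assume "i = sc n z" then have "pr n i = z" using pr_sc[OF zn] by simp
      then show False using zz by simp
    qed
    have a2: "sc n i \<noteq> sc n z" using sc_inj[OF assms(2) zn] zz by blast
    have "z \<noteq> i" "z \<noteq> sc n i" "z \<noteq> sc n (sc n i)" using nz by auto
    then have "d1c n i z = 2" "d1c n (sc n i) z = 2" using a1 a2 unfolding d1c_def by auto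
    then show False using ne by simp
  qed
qed

lemma bij_sc: "bij_betw (sc n) {0..<n} {0..<n}"
  by (rule bij_betw_byWitness[where f'="pr n"]) (auto simp: sc_pr pr_sc sc_lt pr_lt)
lemma bij_pr: "bij_betw (pr n) {0..<n} {0..<n}"
  by (rule bij_betw_byWitness[where f'="sc n"]) (auto simp: sc_pr pr_sc sc_lt pr_lt)



lemma R1_S: "x < n \<Longrightarrow> y < n \<Longrightarrow> R1 (cycle_V n) (cycle_E n) x y = S n x y"
  using R1_char unfolding S_def by simp

lemma upper5: assumes "n \<ge> 5"
  shows "trunc1_resolving (cycle_V n) (cycle_E n) (\<lambda>_. 1/4)"
  unfolding trunc1_resolving_def
proof (intro conjI ballI impI)
  fix x y assume x: "x \<in> cycle_V n" and y: "y \<in> cycle_V n" and ne: "x \<noteq> y"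
  have xn: "x < n" and yn: "y < n" using x y by (auto simp: cycle_V_def)
  have "4 \<le> card (S n x y)" using four_all[OF assms xn yn ne] .
  then have "(1::real) \<le> real (card (S n x y)) / 4" by simp
  then show "1 \<le> sum (\<lambda>_. 1/4 :: real) (R1 (cycle_V n) (cycle_E n) x y)"
    using R1_S[OF xn yn] by simp
qed auto

lemma lower5: assumes "n \<ge> 5" "trunc1_resolving (cycle_V n) (cycle_E n) h"
  shows "real n / 4 \<le> sum h {0..<n}"
proof -
  have h0: "\<And>v. v < n \<Longrightarrow> 0 \<le> h v" using assms(2) by (auto simp: trunc1_resolving_def cycle_V_def)
  have res: "\<And>x y. x < n \<Longrightarrow> y < n \<Longrightarrow> x \<noteq> y \<Longrightarrow> 1 \<le> sum h (S n x y)"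
    using assms(2) R1_S by (auto simp: trunc1_resolving_def cycle_V_def)
  have each: "1 \<le> h (pr n i) + h i + h (sc n i) + h (sc n (sc n i))" if i: "i < n" for i
  proof -
    have si: "sc n i < n" using sc_lt[OF i] .
    have "1 \<le> sum h (S n i (sc n i))" using res[OF i si] sc_ne[of n i] assms(1) i by auto
    also have "\<dots> \<le> sum h {pr n i, i, sc n i, sc n (sc n i)}"
      by (rule sum_mono2) (use adj_sub[OF assms(1) i] h0 pr_lt sc_lt i in auto)
    also have "\<dots> = h (pr n i) + h i + h (sc n i) + h (sc n (sc n i))"
      using dist4[OF assms(1) i] by simp
    finally show ?thesis .
  qed
  have "real n = (\<Sum>i\<in>{0..<n}. (1::real))" by simp
  also have "\<dots> \<le> (\<Sum>i\<in>{0..<n}. h (pr n i) + h i + h (sc n i) + h (sc n (sc n i)))"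
    by (rule sum_mono) (use each in auto)
  also have "\<dots> = (\<Sum>i\<in>{0..<n}. h (pr n i)) + sum h {0..<n} + (\<Sum>i\<in>{0..<n}. h (sc n i)) + (\<Sum>i\<in>{0..<n}. h (sc n (sc n i)))"
    by (simp add: sum.distrib)
  also have "\<dots> = 4 * sum h {0..<n}"
  proof -
    have b2: "bij_betw (\<lambda>i. sc n (sc n i)) {0..<n} {0..<n}"
      using bij_betw_trans[OF bij_sc bij_sc] by (simp add: comp_def)
    have "(\<Sum>i\<in>{0..<n}. h (pr n i)) = sum h {0..<n}" by (rule sum.reindex_bij_betw[OF bij_pr])
    moreover have "(\<Sum>i\<in>{0..<n}. h (sc n i)) = sum h {0..<n}" by (rule sum.reindex_bij_betw[OF bij_sc])
    moreover have "(\<Sum>i\<in>{0..<n}. h (sc n (sc n i))) = sum h {0..<n}" by (rule sum.reindex_bij_betw[OF b2])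
    ultimately show ?thesis by simp
  qed
  finally show ?thesis by simp
qed

lemma five: assumes "n \<ge> 5" shows "frac_dim1 (cycle_V n) (cycle_E n) = real n / 4"
  unfolding frac_dim1_def
proof (rule cInf_eq_minimum)
  show "real n / 4 \<in> {sum h (cycle_V n) |h. trunc1_resolving (cycle_V n) (cycle_E n) h}"
    using upper5[OF assms] by (auto simp: cycle_V_def intro!: exI[of _ "\<lambda>_. 1/4"])
next
  fix x assume "x \<in> {sum h (cycle_V n) |h. trunc1_resolving (cycle_V n) (cycle_E n) h}"
  then show "real n / 4 \<le> x" using lower5[OF assms] by (auto simp: cycle_V_def)
qed



lemma upper34: assumes "n \<ge> 3"
  shows "trunc1_resolving (cycle_V n) (cycle_E n) (\<lambda>_. 1/2)"
  unfolding trunc1_resolving_def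
proof (intro conjI ballI impI)
  fix x y assume x: "x \<in> cycle_V n" and y: "y \<in> cycle_V n" and ne: "x \<noteq> y"
  have xn: "x < n" and yn: "y < n" using x y by (auto simp: cycle_V_def)
  have sub: "{x, y} \<subseteq> S n x y" using self_mem[OF ne] xn yn by (auto simp: S_def)
  have "(1::real) = sum (\<lambda>_. 1/2) {x, y}" using ne by simp
  also have "\<dots> \<le> sum (\<lambda>_. 1/2) (S n x y)"
    by (rule sum_mono2) (use sub in \<open>auto simp: S_def\<close>)
  finally show "1 \<le> sum (\<lambda>_. 1/2 :: real) (R1 (cycle_V n) (cycle_E n) x y)"
    using R1_S[OF xn yn] by simp
qed auto

lemma pair_bound: assumes "trunc1_resolving (cycle_V n) (cycle_E n) h" "a < n" "b < n" "a \<noteq> b"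
  "S n a b \<subseteq> {a, b}"
  shows "1 \<le> h a + h b"
proof -
  have h0: "\<And>v. v < n \<Longrightarrow> 0 \<le> h v" using assms(1) by (auto simp: trunc1_resolving_def cycle_V_def)
  have "1 \<le> sum h (R1 (cycle_V n) (cycle_E n) a b)"
    using assms(1-4) unfolding trunc1_resolving_def cycle_V_def by auto
  then have "1 \<le> sum h (S n a b)" using R1_S[OF assms(2,3)] by simp
  also have "\<dots> \<le> sum h {a, b}"
    by (rule sum_mono2) (use assms h0 in auto)
  finally show ?thesis using assms(4) by simp
qed

lemma lt3: "(z::nat) < 3 \<longleftrightarrow> z = 0 \<or> z = 1 \<or> z = 2" by auto
lemma lt4: "(z::nat) < 4 \<longleftrightarrow> z = 0 \<or> z = 1 \<or> z = 2 \<or> z = 3" by auto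

lemma three: "frac_dim1 (cycle_V 3) (cycle_E 3) = 3 / 2"
  unfolding frac_dim1_def
proof (rule cInf_eq_minimum)
  show "3 / 2 \<in> {sum h (cycle_V 3) |h. trunc1_resolving (cycle_V 3) (cycle_E 3) h}"
    using upper34[of 3] by (auto simp: cycle_V_def intro!: exI[of _ "\<lambda>_. 1/2"])
next
  fix x assume "x \<in> {sum h (cycle_V 3) |h. trunc1_resolving (cycle_V 3) (cycle_E 3) h}"
  then obtain h where x: "x = sum h {0..<3}" and r: "trunc1_resolving (cycle_V 3) (cycle_E 3) h"
    by (auto simp: cycle_V_def)
  have "1 \<le> h 0 + h 1" by (rule pair_bound[OF r]) (auto simp: S_def d1c_def sc_def lt3)
  moreover have "1 \<le> h 1 + h 2" by (rule pair_bound[OF r]) (auto simp: S_def d1c_def sc_def lt3)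
  moreover have "1 \<le> h 0 + h 2" by (rule pair_bound[OF r]) (auto simp: S_def d1c_def sc_def lt3)
  moreover have "{0..<3::nat} = {0, 1, 2}" by auto
  ultimately show "3 / 2 \<le> x" using x by simp
qed

lemma four: "frac_dim1 (cycle_V 4) (cycle_E 4) = 4 / 2"
  unfolding frac_dim1_def
proof (rule cInf_eq_minimum)
  show "4 / 2 \<in> {sum h (cycle_V 4) |h. trunc1_resolving (cycle_V 4) (cycle_E 4) h}"
    using upper34[of 4] by (auto simp: cycle_V_def intro!: exI[of _ "\<lambda>_. 1/2"])
next
  fix x assume "x \<in> {sum h (cycle_V 4) |h. trunc1_resolving (cycle_V 4) (cycle_E 4) h}"
  then obtain h where x: "x = sum h {0..<4}" and r: "trunc1_resolving (cycle_V 4) (cycle_E 4) h"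
    by (auto simp: cycle_V_def)
  have "1 \<le> h 0 + h 2" by (rule pair_bound[OF r]) (auto simp: S_def d1c_def sc_def lt4)
  moreover have "1 \<le> h 1 + h 3" by (rule pair_bound[OF r]) (auto simp: S_def d1c_def sc_def lt4)
  moreover have "{0..<4::nat} = {0, 1, 2, 3}" by auto
  ultimately show "4 / 2 \<le> x" using x by simp
qed

theorem corollary3p5:
  fixes n :: nat
  assumes "n \<ge> 3"
  shows "(n \<in> {3, 4} \<longrightarrow> frac_dim1 (cycle_V n) (cycle_E n) = real n / 2) \<and>
         (n \<ge> 5 \<longrightarrow> frac_dim1 (cycle_V n) (cycle_E n) = real n / 4)"
  using three four five by auto

end
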